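(* Let $\mathcal{G}=(\mathcal{N},\mathcal{P})$ be a connected directed graph with nodes $\mathcal{N}=\{1,\dots,N\}$ and edges (pipes) $\mathcal{P}=\{1,\dots,P\}$, each edge written $\ell=(m,n)$ with $m,n\in\mathcal{N}$, and let $\mathbf{A}\in\mathbb{R}^{P\times N}$ be its edge-node incidence matrix ($A_{\ell,m}=+1$, $A_{\ell,n}=-1$ for $\ell=(m,n)$, all other entries of row $\ell$ zero). The edge set is partitioned as $\mathcal{P}=\mathcal{P}_a\cup\bar{\mathcal{P}}_a$ into compressor edges $\mathcal{P}_a$ and lossy pipes $\bar{\mathcal{P}}_a=\mathcal{P}\setminus\mathcal{P}_a$. Assume every cycle of $\mathcal{G}$ contains at least one lossy pipe. Fix a reference node $r\in\mathcal{N}$ with given value $\psi_r$, a vector $\mathbf{q}\in\mathbb{R}^N$ with $\mathbf{1}^\top\mathbf{q}=0$, friction parameters $a_\ell>0$ for $\ell\in\bar{\mathcal{P}}_a$, and compression ratios $\alpha_\ell>0$ for $\ell\in\mathcal{P}_a$. Consider the gas flow problem: find $\boldsymbol{\phi}\in\mathbb{R}^P$ and $\boldsymbol{\psi}\in\mathbb{R}^N$ (with the $r$-th entry equal to the given $\psi_r$) such that (i) $\mathbf{A}^\top\boldsymbol{\phi}=\mathbf{q}$; (ii) $\psi_m-\psi_n=a_\ell\,\mathrm{sign}(\phi_\ell)\,\phi_\ell^2$ for all $\ell=(m,n)\in\bar{\mathcal{P}}_a$, and $\psi_n\ge 0$ for all $n\in\mathcal{N}$; (iii) $\psi_n=\alpha_\ell\psi_m$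 and $\phi_\ell\ge 0$ for all $\ell=(m,n)\in\mathcal{P}_a$. Then, if this problem has a solution $(\boldsymbol{\phi},\boldsymbol{\psi})$, the solution is unique.
   Context: $\mathrm{sign}(x)$ equals $+1$ if $x>0$, $-1$ if $x<0$, and $0$ if $x=0$. A cycle is a closed path in the underlying undirected graph starting and ending at the same node without repeating edges or nodes. The variables $\psi_n$ represent squared gas pressures at nodes, $\phi_\ell$ gas flows on edges, and $q_n$ nodal gas injections. *)

theory Defs
  imports "HOL-Analysis.Analysis"
begin

text \<open>A directed (multi)graph with node type 'n and edge type 'e (both finite);
  edge e goes from src e to tgt e.\<close>

definition incidence :: "('e \<Rightarrow> 'n) \<Rightarrow> ('e \<Rightarrow> 'n) \<Rightarrow> real ^ 'n ^ 'e" where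
  "incidence src tgt = (\<chi> l m. (if src l = m then 1 else 0) - (if tgt l = m then 1 else 0))"

definition connects :: "('e \<Rightarrow> 'n) \<Rightarrow> ('e \<Rightarrow> 'n) \<Rightarrow> 'e \<Rightarrow> 'n \<Rightarrow> 'n \<Rightarrow> bool" where
  "connects src tgt e u v \<longleftrightarrow> (src e = u \<and> tgt e = v) \<or> (src e = v \<and> tgt e = u)"

definition graph_connected :: "('e \<Rightarrow> 'n) \<Rightarrow> ('e \<Rightarrow> 'n) \<Rightarrow> bool" where
  "graph_connected src tgt \<longleftrightarrow> (\<forall>u v. (\<lambda>x y. \<exists>e. connects src tgt e x y)\<^sup>*\<^sup>* u v)"

text \<open>A cycle of the underlying undirected graph: distinct edges es ! i joining
  distinct nodes vs ! i and vs ! ((i+1) mod k), k = length es \<ge> 1.\<close>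
definition is_cycle :: "('e \<Rightarrow> 'n) \<Rightarrow> ('e \<Rightarrow> 'n) \<Rightarrow> 'e list \<Rightarrow> 'n list \<Rightarrow> bool" where
  "is_cycle src tgt es vs \<longleftrightarrow> length es \<ge> 1 \<and> length vs = length es \<and> distinct es \<and> distinct vs \<and>
     (\<forall>i < length es. connects src tgt (es ! i) (vs ! i) (vs ! ((i + 1) mod length es)))"

definition gas_flow_solution ::
  "('e \<Rightarrow> 'n) \<Rightarrow> ('e \<Rightarrow> 'n) \<Rightarrow> 'e set \<Rightarrow> 'n \<Rightarrow> real \<Rightarrow> real ^ 'n \<Rightarrow> ('e \<Rightarrow> real) \<Rightarrow> ('e \<Rightarrow> real)
    \<Rightarrow> real ^ 'e \<Rightarrow> real ^ 'n \<Rightarrow> bool" where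
  "gas_flow_solution src tgt Pa r psi_r q a alpha \<phi> \<psi> \<longleftrightarrow>
     \<psi> $ r = psi_r \<and>
     transpose (incidence src tgt) *v \<phi> = q \<and>
     (\<forall>l. l \<notin> Pa \<longrightarrow> \<psi> $ src l - \<psi> $ tgt l = a l * sgn (\<phi> $ l) * (\<phi> $ l)\<^sup>2) \<and>
     (\<forall>n. \<psi> $ n \<ge> 0) \<and>
     (\<forall>l\<in>Pa. \<psi> $ tgt l = alpha l * \<psi> $ src l \<and> \<phi> $ l \<ge> 0)"

end

theory Submission
  imports Defs
begin

lemma sq_strict:
  fixes x y :: real
  assumes "x < y"
  shows "sgn x * x^2 < sgn y * y^2"
proof -
  consider "0 \<le> x" | "x < 0 \<and> 0 \<le> y" | "y < 0" by linarith
  then show ?thesis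
  proof cases
    case 1
    then have "x^2 < y^2" using assms by (simp add: power_strict_mono)
    then show ?thesis using 1 assms by (cases "x = 0") (auto simp: sgn_if)
  next
    case 2
    have "0 < x^2" using 2 by simp
    moreover have "sgn x * x^2 = -(x^2)" using 2 by simp
    moreover have "0 \<le> sgn y * y^2" using 2 by (cases "y = 0") (auto simp: sgn_if)
    ultimately show ?thesis by linarith
  next
    case 3
    have "(-y)*(-y) < (-x)*(-x)" using 3 assms by (intro mult_strict_mono) auto
    then have "y^2 < x^2" by (simp add: power2_eq_square)
    then show ?thesis using 3 assms by (auto simp: sgn_if)
  qed
qed

lemma h_rev:
  fixes x y a :: real
  assumes "0 < a" "a * sgn x * x^2 < a * sgn y * y^2"
  shows "x < y"
proof (rule ccontr)
  assume "\<not> x < y"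
  then have "y < x \<or> y = x" by linarith
  then have "sgn y * y^2 \<le> sgn x * x^2" using sq_strict by force
  then have "a * (sgn y * y^2) \<le> a * (sgn x * x^2)" using assms(1) by (simp add: mult_left_mono)
  then show False using assms(2) by (simp add: mult.assoc)
qed

lemma h_inj:
  fixes x y a :: real
  assumes "0 < a" "a * sgn x * x^2 = a * sgn y * y^2"
  shows "x = y"
proof (rule ccontr)
  assume "x \<noteq> y"
  then have "x < y \<or> y < x" by linarith
  then have "sgn x * x^2 \<noteq> sgn y * y^2" using sq_strict by force
  then show False using assms by (simp add: mult.assoc)
qed

lemma At_apply:
  "(transpose (incidence src tgt) *v \<phi>) $ n =
     (\<Sum>l\<in>UNIV. ((if src l = n then 1 else 0) - (if tgt l = n then 1 else 0)) * \<phi> $ l)"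
  by (simp add: matrix_vector_mult_def transpose_def incidence_def)

lemma cross:
  assumes "R\<^sup>*\<^sup>* u v" "\<not> P u" "P v"
  shows "\<exists>x y. R x y \<and> \<not> P x \<and> P y"
  using assms by (induction rule: rtranclp_induct) auto

lemma psi_le:
  fixes src tgt :: "'e::finite \<Rightarrow> 'n::finite"
  assumes conn: "graph_connected src tgt"
    and apos: "\<forall>l. l \<notin> Pa \<longrightarrow> a l > 0"
    and alpos: "\<forall>l\<in>Pa. alpha l > 0"
    and s1: "gas_flow_solution src tgt Pa r psi_r q a alpha \<phi>1 \<psi>1"
    and s2: "gas_flow_solution src tgt Pa r psi_r q a alpha \<phi>2 \<psi>2"
  shows "\<psi>1 $ n \<le> \<psi>2 $ n"
proof (rule ccontr)
  assume "\<not> \<psi>1 $ n \<le> \<psi>2 $ n"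
  define S where "S = {n. \<psi>2 $ n < \<psi>1 $ n}"
  have nS: "n \<in> S" using \<open>\<not> \<psi>1 $ n \<le> \<psi>2 $ n\<close> by (simp add: S_def)
  have R1: "\<psi>1 $ r = psi_r" and A1: "transpose (incidence src tgt) *v \<phi>1 = q"
    and L1: "\<forall>l. l \<notin> Pa \<longrightarrow> \<psi>1 $ src l - \<psi>1 $ tgt l = a l * sgn (\<phi>1 $ l) * (\<phi>1 $ l)\<^sup>2"
    and C1: "\<forall>l\<in>Pa. \<psi>1 $ tgt l = alpha l * \<psi>1 $ src l \<and> \<phi>1 $ l \<ge> 0"
    using s1 unfolding gas_flow_solution_def by blast+
  have R2: "\<psi>2 $ r = psi_r" and A2: "transpose (incidence src tgt) *v \<phi>2 = q"
    and L2: "\<forall>l. l \<notin> Pa \<longrightarrow> \<psi>2 $ src l - \<psi>2 $ tgt l = a l * sgn (\<phi>2 $ l) * (\<phi>2 $ l)\<^sup>2"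
    and C2: "\<forall>l\<in>Pa. \<psi>2 $ tgt l = alpha l * \<psi>2 $ src l \<and> \<phi>2 $ l \<ge> 0"
    using s2 unfolding gas_flow_solution_def by blast+
  have rS: "r \<notin> S" using R1 R2 by (simp add: S_def)
  have "(\<lambda>x y. \<exists>e. connects src tgt e x y)\<^sup>*\<^sup>* r n" using conn by (simp add: graph_connected_def)
  then have "\<exists>x y. (\<exists>e. connects src tgt e x y) \<and> \<not> x \<in> S \<and> y \<in> S"
    by (rule cross[where P="\<lambda>z. z \<in> S"]) (use nS rS in auto)
  then obtain x y e where exy: "connects src tgt e x y" "x \<notin> S" "y \<in> S"
    by blast
  define T where "T l = (\<phi>1 $ l - \<phi>2 $ l) * ((if src l \<in> S then 1 else 0) - (if tgt l \<in> S then 1 else 0))" for l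
  have key: "0 \<le> T l \<and> ((src l \<in> S) \<noteq> (tgt l \<in> S) \<longrightarrow> 0 < T l)" for l
  proof (cases "l \<in> Pa")
    case True
    have al: "alpha l > 0" using alpos True by blast
    have e1: "\<psi>1 $ tgt l = alpha l * \<psi>1 $ src l" and e2: "\<psi>2 $ tgt l = alpha l * \<psi>2 $ src l"
      using C1 C2 True by blast+
    have "(src l \<in> S) = (tgt l \<in> S)"
      unfolding S_def mem_Collect_eq e1 e2 using al by (rule mult_less_cancel_left_pos[symmetric])
    then show ?thesis by (simp add: T_def)
  next
    case False
    have al: "a l > 0" using apos False by blast
    have e1: "\<psi>1 $ src l - \<psi>1 $ tgt l = a l * sgn (\<phi>1 $ l) * (\<phi>1 $ l)\<^sup>2"
      and e2: "\<psi>2 $ src l - \<psi>2 $ tgt l = a l * sgn (\<phi>2 $ l) * (\<phi>2 $ l)\<^sup>2"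
      using L1 L2 False by blast+
    consider "src l \<in> S" "tgt l \<notin> S" | "src l \<notin> S" "tgt l \<in> S" | "(src l \<in> S) = (tgt l \<in> S)" by blast
    then show ?thesis
    proof cases
      case 1
      then have "\<psi>2 $ src l - \<psi>2 $ tgt l < \<psi>1 $ src l - \<psi>1 $ tgt l" by (simp add: S_def)
      then have "a l * sgn (\<phi>2 $ l) * (\<phi>2 $ l)\<^sup>2 < a l * sgn (\<phi>1 $ l) * (\<phi>1 $ l)\<^sup>2"
        using e1 e2 by linarith
      then have "\<phi>2 $ l < \<phi>1 $ l" by (rule h_rev[OF al])
      then show ?thesis using 1 by (simp add: T_def)
    next
      case 2
      then have "\<psi>1 $ src l - \<psi>1 $ tgt l < \<psi>2 $ src l - \<psi>2 $ tgt l" by (simp add: S_def)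
      then have "a l * sgn (\<phi>1 $ l) * (\<phi>1 $ l)\<^sup>2 < a l * sgn (\<phi>2 $ l) * (\<phi>2 $ l)\<^sup>2"
        using e1 e2 by linarith
      then have "\<phi>1 $ l < \<phi>2 $ l" by (rule h_rev[OF al])
      then show ?thesis using 2 by (simp add: T_def)
    next
      case 3
      then show ?thesis by (simp add: T_def)
    qed
  qed
  have "(src e \<in> S) \<noteq> (tgt e \<in> S)" using exy by (auto simp: connects_def)
  then have "0 < T e" using key by blast
  then have pos: "0 < sum T UNIV" using key sum_pos2[of UNIV e T] by simp
  have "sum T UNIV = (\<Sum>l\<in>UNIV. \<Sum>m\<in>S. ((if src l = m then 1 else 0) - (if tgt l = m then 1 else 0)) * (\<phi>1 $ l - \<phi>2 $ l))"
    unfolding T_def by (intro sum.cong refl) (simp add: sum_distrib_right[symmetric] sum_subtractf)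
  also have "\<dots> = (\<Sum>m\<in>S. \<Sum>l\<in>UNIV. ((if src l = m then 1 else 0) - (if tgt l = m then 1 else 0)) * (\<phi>1 $ l - \<phi>2 $ l))"
    by (rule sum.swap)
  also have "\<dots> = (\<Sum>m\<in>S. (transpose (incidence src tgt) *v \<phi>1) $ m - (transpose (incidence src tgt) *v \<phi>2) $ m)"
    by (simp only: At_apply sum_subtractf[symmetric] right_diff_distrib)
  also have "\<dots> = 0" unfolding A1 A2 by simp
  finally show False using pos by simp
qed


lemma circ_zero:
  fixes src tgt :: "'e::finite \<Rightarrow> 'n::finite" and d :: "real ^ 'e"
  assumes cyc: "\<forall>es vs. is_cycle src tgt es vs \<longrightarrow> (\<exists>l\<in>set es. l \<notin> Pa)"
    and supp: "\<forall>l. d $ l \<noteq> 0 \<longrightarrow> l \<in> Pa"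
    and circ: "\<forall>m. (\<Sum>l\<in>UNIV. ((if src l = m then 1 else 0) - (if tgt l = m then 1 else 0)) * d $ l) = 0"
  shows "d $ l0 = 0"
proof (rule ccontr)
  assume l0: "d $ l0 \<noteq> 0"
  define E where "E = {l. d $ l \<noteq> 0}"
  have EPa: "E \<subseteq> Pa" using supp by (auto simp: E_def)
  define v0 where "v0 = src l0"
  define path where "path es vs \<longleftrightarrow> length vs = Suc (length es) \<and> distinct vs \<and> distinct es \<and>
     set es \<subseteq> E \<and> vs ! 0 = v0 \<and> (\<forall>i<length es. connects src tgt (es ! i) (vs ! i) (vs ! Suc i))"
    for es vs
  have p0: "path [] [v0]" by (simp add: path_def)
  define Ls where "Ls = {length vs | es vs. path es vs}"
  have "Ls \<subseteq> {..CARD('n)}"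
  proof
    fix z assume "z \<in> Ls"
    then obtain es vs where "path es vs" "z = length vs" by (auto simp: Ls_def)
    then have "z = card (set vs)" by (simp add: path_def distinct_card)
    also have "\<dots> \<le> CARD('n)" by (rule card_mono) auto
    finally show "z \<in> {..CARD('n)}" by simp
  qed
  then have fin: "finite Ls" by (rule finite_subset) simp
  have "1 \<in> Ls" using p0 unfolding Ls_def by force
  then have "Max Ls \<in> Ls" using fin by (intro Max_in) auto
  then obtain es vs where P: "path es vs" "length vs = Max Ls" by (auto simp: Ls_def)
  have maxP: "length vs' \<le> Max Ls" if "path es' vs'" for es' vs'
    using that fin by (intro Max_ge) (auto simp: Ls_def)
  define k where "k = length es"
  define x where "x = vs ! k"
  have lvs: "length vs = Suc k" using P by (simp add: path_def k_def)
  have dvs: "distinct vs" and des: "distinct es" and sE: "set es \<subseteq> E" and v0: "vs ! 0 = v0"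
    and con: "\<forall>i<k. connects src tgt (es ! i) (vs ! i) (vs ! Suc i)"
    using P by (auto simp: path_def k_def)
  have ex: "\<exists>e'\<in>E. (src e' = x \<or> tgt e' = x) \<and> e' \<notin> set es"
  proof (cases "k = 0")
    case True
    then have "es = []" by (simp add: k_def)
    moreover have "x = v0" using True v0 by (simp add: x_def)
    ultimately show ?thesis using l0 by (auto simp: E_def v0_def)
  next
    case False
    show ?thesis
    proof (rule ccontr)
      assume H: "\<not> ?thesis"
      define e where "e = es ! (k - 1)"
      have ce: "connects src tgt e (vs ! (k - 1)) x"
      proof -
        have "k - 1 < k" "Suc (k - 1) = k" using False by auto
        then show ?thesis using con unfolding e_def x_def by metis
      qed
      have neq: "vs ! (k - 1) \<noteq> x"
        using dvs lvs False by (simp add: x_def nth_eq_iff_index_eq)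
      have eE: "e \<in> E" using sE False by (auto simp: e_def k_def)
      define f where "f l = ((if src l = x then 1 else 0) - (if tgt l = x then 1 else 0)) * d $ l" for l
      have zero: "f l = 0" if "l \<noteq> e" for l
      proof (cases "d $ l = 0 \<or> \<not> (src l = x \<or> tgt l = x)")
        case True
        then show ?thesis by (auto simp: f_def)
      next
        case False
        then have "l \<in> E" "src l = x \<or> tgt l = x" by (auto simp: E_def)
        then have "l \<in> set es" using H by blast
        then obtain j where j: "j < k" "es ! j = l" by (auto simp: in_set_conv_nth k_def)
        have "connects src tgt l (vs ! j) (vs ! Suc j)" using con j by auto
        then have "x = vs ! j \<or> x = vs ! Suc j"
          using \<open>src l = x \<or> tgt l = x\<close> by (auto simp: connects_def)
        then have "k = j \<or> k = Suc j"
          using dvs lvs j by (auto simp: x_def nth_eq_iff_index_eq)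
        then have "j = k - 1" using j by auto
        then show ?thesis using j that by (simp add: e_def)
      qed
      have "sum f UNIV = f e + sum f (UNIV - {e})" by (simp add: sum.remove)
      also have "sum f (UNIV - {e}) = 0" by (rule sum.neutral) (use zero in auto)
      finally have "sum f UNIV = f e" by simp
      moreover have "f e \<noteq> 0"
        using ce neq eE by (auto simp: f_def connects_def E_def)
      moreover have "sum f UNIV = 0" using circ by (simp add: f_def)
      ultimately show False by simp
    qed
  qed
  then obtain e' where e': "e' \<in> E" "src e' = x \<or> tgt e' = x" "e' \<notin> set es" by blast
  define w where "w = (if src e' = x then tgt e' else src e')"
  have cw: "connects src tgt e' x w" using e'(2) by (auto simp: connects_def w_def)
  show False
  proof (cases "w \<in> set vs")
    case True
    then obtain i where i: "i < length vs" "vs ! i = w" by (auto simp: in_set_conv_nth)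
    define ces where "ces = drop i es @ [e']"
    define cvs where "cvs = drop i vs"
    have ik: "i \<le> k" using i lvs by simp
    have lces: "length ces = Suc (k - i)" by (simp add: ces_def k_def)
    have lcvs: "length cvs = Suc (k - i)" using lvs ik by (simp add: cvs_def)
    have "is_cycle src tgt ces cvs"
      unfolding is_cycle_def
    proof (intro conjI allI impI)
      show "1 \<le> length ces" using lces by simp
      show "length cvs = length ces" using lces lcvs by simp
      show "distinct ces" using des e'(3) by (auto simp: ces_def dest: in_set_dropD)
      show "distinct cvs" using dvs by (simp add: cvs_def)
      fix j assume j: "j < length ces"
      show "connects src tgt (ces ! j) (cvs ! j) (cvs ! ((j + 1) mod length ces))"
      proof (cases "j < k - i")
        case True
        have "ces ! j = es ! (i + j)" using True ik by (simp add: ces_def nth_append k_def)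
        moreover have "cvs ! j = vs ! (i + j)" using True ik lvs by (simp add: cvs_def)
        moreover have "(j + 1) mod length ces = j + 1" using True lces by simp
        moreover have "cvs ! (j + 1) = vs ! Suc (i + j)" using True ik lvs by (simp add: cvs_def)
        moreover have "connects src tgt (es ! (i + j)) (vs ! (i + j)) (vs ! Suc (i + j))"
          using con True by simp
        ultimately show ?thesis by simp
      next
        case False
        then have jj: "j = k - i" using j lces by simp
        have "ces ! j = e'" using jj ik by (simp add: ces_def nth_append k_def)
        moreover have "cvs ! j = x" using jj ik lvs by (simp add: cvs_def x_def)
        moreover have "(j + 1) mod length ces = 0" using jj lces by simp
        moreover have "cvs ! 0 = w" using i ik lvs by (simp add: cvs_def)
        ultimately show ?thesis using cw by simp
      qed
    qed
    then obtain l' where "l' \<in> set ces" "l' \<notin> Pa" using cyc by blast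
    moreover have "set ces \<subseteq> E" using sE e'(1) by (auto simp: ces_def dest: in_set_dropD)
    ultimately show False using EPa by blast
  next
    case False
    have "path (es @ [e']) (vs @ [w])"
      unfolding path_def
    proof (intro conjI allI impI)
      show "length (vs @ [w]) = Suc (length (es @ [e']))" using lvs by (simp add: k_def)
      show "distinct (vs @ [w])" using dvs False by simp
      show "distinct (es @ [e'])" using des e'(3) by simp
      show "set (es @ [e']) \<subseteq> E" using sE e'(1) by simp
      show "(vs @ [w]) ! 0 = v0" using v0 lvs by (simp add: nth_append)
      fix j assume j: "j < length (es @ [e'])"
      show "connects src tgt ((es @ [e']) ! j) ((vs @ [w]) ! j) ((vs @ [w]) ! Suc j)"
      proof (cases "j < k")
        case True
        then show ?thesis using con lvs by (simp add: nth_append k_def)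
      next
        case False
        then have "j = k" using j by (simp add: k_def)
        then show ?thesis using cw lvs by (simp add: nth_append k_def x_def)
      qed
    qed
    then have "length (vs @ [w]) \<le> Max Ls" by (rule maxP)
    then show False using P(2) by simp
  qed
qed

theorem theorem1:
  fixes src tgt :: "'e::finite \<Rightarrow> 'n::finite"
    and Pa :: "'e set" and r :: 'n and psi_r :: real and q :: "real ^ 'n"
    and a alpha :: "'e \<Rightarrow> real"
  assumes "graph_connected src tgt"
    and "\<forall>es vs. is_cycle src tgt es vs \<longrightarrow> (\<exists>l\<in>set es. l \<notin> Pa)"
    and "(\<Sum>n\<in>UNIV. q $ n) = 0"
    and "\<forall>l. l \<notin> Pa \<longrightarrow> a l > 0"
    and "\<forall>l\<in>Pa. alpha l > 0"
    and "gas_flow_solution src tgt Pa r psi_r q a alpha \<phi>1 \<psi>1"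
    and "gas_flow_solution src tgt Pa r psi_r q a alpha \<phi>2 \<psi>2"
  shows "\<phi>1 = \<phi>2 \<and> \<psi>1 = \<psi>2"
proof -
  have le1: "\<psi>1 $ n \<le> \<psi>2 $ n" for n using psi_le[OF assms(1,4,5,6,7)] .
  have le2: "\<psi>2 $ n \<le> \<psi>1 $ n" for n using psi_le[OF assms(1,4,5,7,6)] .
  have psi: "\<psi>1 = \<psi>2" using le1 le2 by (simp add: vec_eq_iff order_antisym)
  have A1: "transpose (incidence src tgt) *v \<phi>1 = q"
    and L1: "\<forall>l. l \<notin> Pa \<longrightarrow> \<psi>1 $ src l - \<psi>1 $ tgt l = a l * sgn (\<phi>1 $ l) * (\<phi>1 $ l)\<^sup>2"
    using assms(6) unfolding gas_flow_solution_def by blast+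
  have A2: "transpose (incidence src tgt) *v \<phi>2 = q"
    and L2: "\<forall>l. l \<notin> Pa \<longrightarrow> \<psi>2 $ src l - \<psi>2 $ tgt l = a l * sgn (\<phi>2 $ l) * (\<phi>2 $ l)\<^sup>2"
    using assms(7) unfolding gas_flow_solution_def by blast+
  define d where "d = \<phi>1 - \<phi>2"
  have supp: "\<forall>l. d $ l \<noteq> 0 \<longrightarrow> l \<in> Pa"
  proof (intro allI impI)
    fix l assume "d $ l \<noteq> 0"
    show "l \<in> Pa"
    proof (rule ccontr)
      assume nl: "l \<notin> Pa"
      have "a l * sgn (\<phi>1 $ l) * (\<phi>1 $ l)\<^sup>2 = a l * sgn (\<phi>2 $ l) * (\<phi>2 $ l)\<^sup>2"
      proof -
        have e1: "\<psi>1 $ src l - \<psi>1 $ tgt l = a l * sgn (\<phi>1 $ l) * (\<phi>1 $ l)\<^sup>2" using L1 nl by blast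
        have e2: "\<psi>2 $ src l - \<psi>2 $ tgt l = a l * sgn (\<phi>2 $ l) * (\<phi>2 $ l)\<^sup>2" using L2 nl by blast
        show ?thesis using e1 e2 unfolding psi by linarith
      qed
      then have "\<phi>1 $ l = \<phi>2 $ l" using h_inj assms(4) nl by blast
      then show False using \<open>d $ l \<noteq> 0\<close> by (simp add: d_def)
    qed
  qed
  have circ: "\<forall>m. (\<Sum>l\<in>UNIV. ((if src l = m then 1 else 0) - (if tgt l = m then 1 else 0)) * d $ l) = 0"
  proof
    fix m
    have "(\<Sum>l\<in>UNIV. ((if src l = m then 1 else 0) - (if tgt l = m then 1 else 0)) * d $ l)
        = (transpose (incidence src tgt) *v \<phi>1) $ m - (transpose (incidence src tgt) *v \<phi>2) $ m"
      by (simp only: d_def At_apply sum_subtractf[symmetric] right_diff_distrib vector_minus_component)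
    also have "\<dots> = 0" unfolding A1 A2 by simp
    finally show "(\<Sum>l\<in>UNIV. ((if src l = m then 1 else 0) - (if tgt l = m then 1 else 0)) * d $ l) = 0" .
  qed
  have "d $ l = 0" for l by (rule circ_zero[OF assms(2) supp circ])
  then have "\<phi>1 = \<phi>2" by (simp add: vec_eq_iff d_def)
  then show ?thesis using psi by simp
qed

end
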